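(* Let $N\ge2$, $n\ge1$, $\tilde J>0$ and $J_i=\tilde J/N^i$ for $1\le i\le n$. For all integers $1\le s\le N$ and $0\le m\le n-1$, $$\max_{1\le i\le N^n}\mathcal H\big(h^{(m,s)};\gamma_i\big)=\max_{1\le i\le sN^m}\mathcal H\big(h^{(m,s)};\gamma_i\big).$$
   Context: Hierarchical lattice $\Lambda_N^n=\{1,\dots,N^n\}$ (integer $a$ = vertex $v_a$); $k$-blocks are $\{jN^k+1,\dots,(j+1)N^k\}$; $d(a,b)$ is the smallest $k\ge0$ with $a,b$ in a common $k$-block. For a field $h$, $\mathcal H(h;\sigma)=-\frac12\sum_{\{v,w\},v\ne w}J_{d(v,w)}\sigma(v)\sigma(w)-\frac h2\sum_v\sigma(v)$ (unordered pairs). $\gamma_k$ is the configuration with $+1$ exactly on $\{1,\dots,k\}$. For integers $m,s$, $h^{(m,s)}=\tilde J\big[(1-\frac1N)(n-m)-(s-1)\frac1N\big]$. *)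

theory Defs
  imports Complex_Main
begin

text \<open>Hierarchical lattice with vertices 1..N^n. The k-block containing vertex a
  has index (a-1) div N^k. The hierarchical distance d(a,b) is the least k
  with a, b in a common k-block.\<close>

definition hdist :: "nat \<Rightarrow> nat \<Rightarrow> nat \<Rightarrow> nat" where
  "hdist N a b = (LEAST k. (a - 1) div N ^ k = (b - 1) div N ^ k)"

text \<open>Hamiltonian: sum over unordered pairs {v,w}, v \<noteq> w, written as pairs v < w.\<close>

definition hamiltonian ::
  "nat \<Rightarrow> nat \<Rightarrow> (nat \<Rightarrow> real) \<Rightarrow> real \<Rightarrow> (nat \<Rightarrow> real) \<Rightarrow> real" where
  "hamiltonian N n J h \<sigma> =
     - (1/2) * (\<Sum>(v,w) \<in> {(v,w). 1 \<le> v \<and> v < w \<and> w \<le> N ^ n}.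
                   J (hdist N v w) * \<sigma> v * \<sigma> w)
     - (h / 2) * (\<Sum>v \<in> {1..N ^ n}. \<sigma> v)"

definition gamma :: "nat \<Rightarrow> nat \<Rightarrow> real" where
  "gamma k v = (if 1 \<le> v \<and> v \<le> k then 1 else -1)"

definition hfield :: "nat \<Rightarrow> nat \<Rightarrow> real \<Rightarrow> int \<Rightarrow> int \<Rightarrow> real" where
  "hfield N n Jt m s =
     Jt * ((1 - 1 / real N) * (real n - real_of_int m) - (real_of_int s - 1) / real N)"

end

theory Submission
  imports Defs
begin


lemma sum_add_split:
  fixes f :: "nat \<Rightarrow> 'a::comm_monoid_add"
  shows "(\<Sum>j<a+b. f j) = (\<Sum>j<a. f j) + (\<Sum>j<b. f (a+j))"
  by (induction b) (simp_all add: add.assoc)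

lemma sum_split2:
  fixes f :: "nat \<Rightarrow> 'a::comm_monoid_add"
  shows "(\<Sum>b<M*N. f b) = (\<Sum>x<M. \<Sum>y<N. f (x*N + y))"
proof (induction M)
  case 0 then show ?case by simp
next
  case (Suc M)
  have "(\<Sum>b<Suc M*N. f b) = (\<Sum>b<M*N + N. f b)" by (simp add: add.commute)
  then show ?case using Suc by (simp add: sum_add_split)
qed

definition ds :: "nat \<Rightarrow> nat \<Rightarrow> nat \<Rightarrow> nat" where
  "ds N n a = (\<Sum>i<n. a div N^i mod N)"

lemma ds_0[simp]: "ds N 0 a = 0" by (simp add: ds_def)

lemma ds_Suc: "ds N (Suc n) a = a mod N + ds N n (a div N)"
  unfolding ds_def sum.lessThan_Suc_shift
  by (simp add: div_mult2_eq mult.commute)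

lemma ds_zero[simp]: "ds N n 0 = 0" by (simp add: ds_def)

lemma ds_digit: assumes "y < N" shows "ds N (Suc n) (x*N + y) = y + ds N n x"
  using assms by (simp add: ds_Suc)

lemma ds_add:
  assumes "p \<le> n" "j < N^p" "N \<ge> 2"
  shows "ds N n (x*N^p + j) = ds N n j + ds N (n-p) x"
  using assms
proof (induction p arbitrary: n j)
  case 0 then show ?case by simp
next
  case (Suc p)
  then obtain n' where n: "n = Suc n'" by (cases n) auto
  have jj: "j div N < N^p" using Suc.prems by (simp add: less_mult_imp_div_less mult.commute)
  have "x * N ^ Suc p + j = (x*N^p + j div N)*N + j mod N"
    by (simp add: algebra_simps) 
  then have "ds N n (x * N ^ Suc p + j) = j mod N + ds N n' (x*N^p + j div N)"
    using Suc.prems n by (simp add: ds_digit)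
  also have "\<dots> = j mod N + ds N n' (j div N) + ds N (n'-p) x"
    using Suc.IH[of n' "j div N"] Suc.prems n jj by simp
  finally show ?case using n by (simp add: ds_Suc)
qed

lemma ds_small: assumes "t < N" "1 \<le> k" shows "ds N k t = t"
proof -
  obtain k' where "k = Suc k'" using assms by (cases k) auto
  then show ?thesis using assms by (simp add: ds_Suc)
qed

lemma ds_block:
  assumes "p \<le> n" "N \<ge> 2"
  shows "2 * (\<Sum>j<N^p. real (ds N n j)) = real p * (real N - 1) * real N ^ p"
  using assms
proof (induction p arbitrary: n)
  case 0 then show ?case by simp
next
  case (Suc p)
  then obtain n' where n: "n = Suc n'" by (cases n) auto
  have g: "2 * (\<Sum>y<N. real y) = real N * (real N - 1)"
  proof (cases N)
    case 0 then show ?thesis by simp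
  next
    case (Suc N')
    have "{..<N} = {0..N'}" using Suc by auto
    then show ?thesis using double_gauss_sum[of N', where 'a=real] Suc by (simp add: algebra_simps)
  qed
  have "(\<Sum>j<N^Suc p. real (ds N n j)) = (\<Sum>x<N^p. \<Sum>y<N. real (ds N n (x*N+y)))"
    using sum_split2[of "\<lambda>j. real (ds N n j)" "N^p" N] by (simp add: mult.commute)
  also have "\<dots> = (\<Sum>x<N^p. \<Sum>y<N. real y + real (ds N n' x))"
    by (intro sum.cong refl) (simp add: n ds_digit)
  also have "\<dots> = (\<Sum>x<N^p. (\<Sum>y<N. real y) + real N * real (ds N n' x))"
    by (simp add: sum.distrib)
  also have "\<dots> = real N^p * (\<Sum>y<N. real y) + real N * (\<Sum>x<N^p. real (ds N n' x))"
    by (simp add: sum.distrib sum_distrib_left)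
  finally have "2 * (\<Sum>j<N^Suc p. real (ds N n j)) = real N^p * (2*(\<Sum>y<N. real y)) + real N * (2*(\<Sum>x<N^p. real (ds N n' x)))"
    by (simp add: algebra_simps)
  also have "\<dots> = real N^p * (real N * (real N - 1)) + real N * (real p * (real N - 1) * real N ^ p)"
    using g Suc.IH[of n'] Suc.prems n by simp
  finally show ?case by (simp add: algebra_simps)
qed



definition FF :: "nat \<Rightarrow> nat \<Rightarrow> real \<Rightarrow> nat \<Rightarrow> real" where
  "FF N n c K = (\<Sum>j<K. c - 2 * real (ds N n j))"

lemma FF_shift:
  assumes "p \<le> n" "L \<le> N^p" "N \<ge> 2"
  shows "FF N n c (x*N^p + L) = FF N n c (x*N^p) + FF N n c L - 2 * real L * real (ds N (n-p) x)"
proof -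
  have "FF N n c (x*N^p + L) = FF N n c (x*N^p) + (\<Sum>j<L. c - 2 * real (ds N n (x*N^p + j)))"
    unfolding FF_def by (rule sum_add_split)
  also have "(\<Sum>j<L. c - 2 * real (ds N n (x*N^p + j))) = (\<Sum>j<L. (c - 2 * real (ds N n j)) - 2 * real (ds N (n-p) x))"
    using assms by (intro sum.cong refl) (simp add: ds_add)
  also have "\<dots> = FF N n c L - 2 * real L * real (ds N (n-p) x)"
    unfolding FF_def by (simp add: sum_subtractf)
  finally show ?thesis by simp
qed

lemma FF_block:
  assumes "p \<le> n" "N \<ge> 2"
  shows "FF N n c (N^p) = real N^p * (c - real p * (real N - 1))"
proof -
  have "FF N n c (N^p) = real N^p * c - 2 * (\<Sum>j<N^p. real (ds N n j))"
    unfolding FF_def by (simp add: sum_subtractf sum_distrib_left)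
  then show ?thesis using ds_block[OF assms] by (simp add: algebra_simps)
qed

lemma FF_0[simp]: "FF N n c 0 = 0" by (simp add: FF_def)
lemma FF_1: "FF N n c 1 = c" "FF N n c (Suc 0) = c" by (simp_all add: FF_def)

lemma FF_main:
  assumes N: "N \<ge> 2" and s: "1 \<le> s" "s \<le> N" and m: "m + 1 \<le> n"
    and c: "c = (real N - 1) * real m + real s - 1"
  shows "\<exists>K'\<in>{1..s*N^m}. FF N n c K \<le> FF N n c K'"
proof -
  define F where "F = FF N n c"
  define M where "M = N^m"
  have Mpos: "M \<ge> 1" using N by (simp add: M_def)
  have c0: "c \<ge> 0"
  proof -
    have "(real N - 1) * real m \<ge> 0" using N by simp
    moreover have "real s \<ge> 1" using s by simp
    ultimately show ?thesis using c by linarith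
  qed
  have one: "1 \<in> {1..s*N^m}" using s N by simp
  \<comment> \<open>Reduce modulo N^(m+1)\<close>
  have FPle: "F (N^(m+1)) \<le> 0"
  proof -
    have "F (N^(m+1)) = real N^(m+1) * (c - real (m+1) * (real N - 1))"
      using FF_block[OF m N, of c] by (simp add: F_def)
    also have "c - real (m+1) * (real N - 1) = real s - real N" using c by (simp add: algebra_simps)
    also have "real N^(m+1) * (real s - real N) \<le> 0" using s by (intro mult_nonneg_nonpos) auto
    finally show ?thesis .
  qed
  have multP: "F (x * N^(m+1)) \<le> 0" for x
  proof (induction x)
    case 0 then show ?case by (simp add: F_def)
  next
    case (Suc x)
    have "F (Suc x * N^(m+1)) = F (x*N^(m+1) + N^(m+1))" by (simp add: add.commute)
    also have "\<dots> = F (x*N^(m+1)) + F (N^(m+1)) - 2 * real (N^(m+1)) * real (ds N (n-(m+1)) x)"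
      unfolding F_def using FF_shift[OF m _ N] by simp
    moreover have "0 \<le> 2 * real (N^(m+1)) * real (ds N (n-(m+1)) x)" by simp
    ultimately show ?case using Suc FPle by linarith
  qed
  define R where "R = K mod N^(m+1)"
  have KR: "K = (K div N^(m+1)) * N^(m+1) + R" unfolding R_def by (rule div_mult_mod_eq[symmetric])
  have "R < N^(m+1)" using N by (simp add: R_def)
  have FKR: "F K \<le> F R"
  proof -
    have "F K = F ((K div N^(m+1)) * N^(m+1)) + F R - 2 * real R * real (ds N (n-(m+1)) (K div N^(m+1)))"
      unfolding F_def using FF_shift[OF m _ N, of R c "K div N^(m+1)"] \<open>R < N^(m+1)\<close> KR by simp
    moreover have "0 \<le> 2 * real R * real (ds N (n-(m+1)) (K div N^(m+1)))" by simp
    ultimately show ?thesis using multP[of "K div N^(m+1)"] by linarith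
  qed
  define t where "t = R div M"
  define R' where "R' = R mod M"
  have RR: "R = t * M + R'" unfolding t_def R'_def by (rule div_mult_mod_eq[symmetric])
  have R'M: "R' < M" using Mpos by (simp add: R'_def)
  have tN: "t < N" using \<open>R < N^(m+1)\<close> by (simp add: t_def M_def less_mult_imp_div_less)
  have mn: "m \<le> n" using m by simp
  have FM: "F M = real M * (real s - 1)"
  proof -
    have "F M = real N^m * (c - real m * (real N - 1))"
      using FF_block[OF mn N, of c] by (simp add: F_def M_def)
    also have "c - real m * (real N - 1) = real s - 1" using c by (simp add: algebra_simps)
    finally show ?thesis by (simp add: M_def)
  qed
  have step: "F ((Suc x) * M) = F (x*M) + real M * (real s - 1 - 2 * real x)" if "x < N" for x
  proof -
    have "F (Suc x * M) = F (x*M + M)" by (simp add: add.commute)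
    also have "\<dots> = F (x*M) + F M - 2 * real M * real (ds N (n-m) x)"
      unfolding F_def M_def using FF_shift[OF mn _ N] by simp
    also have "ds N (n-m) x = x" using ds_small[OF that] m by simp
    finally show ?thesis using FM by (simp add: algebra_simps)
  qed
  have dec: "F ((s - 1 + d) * M) \<le> F ((s-1)*M)" if "s - 1 + d \<le> N" for d
    using that
  proof (induction d)
    case 0 then show ?case by simp
  next
    case (Suc d)
    have "F ((s - 1 + Suc d) * M) = F (Suc (s-1+d) * M)" by simp
    also have "\<dots> = F ((s-1+d)*M) + real M * (real s - 1 - 2 * real (s-1+d))"
      using step[of "s-1+d"] Suc.prems by simp
    also have "real M * (real s - 1 - 2 * real (s-1+d)) \<le> 0"
      using s Mpos by (intro mult_nonneg_nonpos) auto
    finally show ?case using Suc by simp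
  qed
  show ?thesis
  proof (cases "R \<le> s * N^m")
    case True
    show ?thesis
    proof (cases "R = 0")
      case True
      then show ?thesis using FKR one c0 by (auto simp: F_def FF_1 intro!: bexI[of _ 1])
    next
      case False
      then show ?thesis using FKR True by (auto simp: F_def intro!: bexI[of _ R])
    qed
  next
    case False
    have ts: "t \<ge> s"
    proof (rule ccontr)
      assume "\<not> s \<le> t"
      then have "Suc t \<le> s" by simp
      then have "Suc t * M \<le> s * M" by (rule mult_le_mono1)
      then have "R < s * M" using RR R'M by simp
      then show False using False by (simp add: M_def)
    qed
    define K' where "K' = (s-1)*M + R'"
    have FR: "F R = F (t*M) + F R' - 2 * real R' * real t"
      unfolding F_def M_def using FF_shift[OF mn _ N, of R' c t] R'M RR ds_small[OF tN] m by (simp add: M_def)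
    have FK': "F K' = F ((s-1)*M) + F R' - 2 * real R' * real (s-1)"
      unfolding F_def M_def K'_def using FF_shift[OF mn _ N, of R' c "s-1"] R'M ds_small[of "s-1" N] m s by (simp add: M_def)
    have "F (t*M) \<le> F ((s-1)*M)" using dec[of "t - (s-1)"] ts tN s by simp
    moreover have "real R' * real (s-1) \<le> real R' * real t" using ts by (intro mult_left_mono) auto
    ultimately have "F R \<le> F K'" using FR FK' by simp
    moreover have "K' \<le> s * N^m" using R'M s by (simp add: K'_def M_def algebra_simps)
    ultimately show ?thesis
    proof (cases "K' = 0")
      case True
      then show ?thesis using FKR \<open>F R \<le> F K'\<close> one c0 by (auto simp: F_def FF_1 intro!: bexI[of _ 1])
    next
      case False
      then show ?thesis using FKR \<open>F R \<le> F K'\<close> \<open>K' \<le> s * N^m\<close> by (auto simp: F_def intro!: bexI[of _ K'])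
    qed
  qed
qed



definition dd :: "nat \<Rightarrow> nat \<Rightarrow> nat \<Rightarrow> nat" where
  "dd N a b = (LEAST k. a div N^k = b div N^k)"

lemma hdist_dd: "hdist N (Suc a) (Suc b) = dd N a b"
  by (simp add: hdist_def dd_def)

lemma dd_le: assumes "a < N^n" "b < N^n" shows "dd N a b \<le> n"
  unfolding dd_def using assms by (intro Least_le) (simp add: div_less)

lemma big_pow: assumes "N \<ge> 2" "x \<le> k" shows "x < N^k"
proof -
  have "x < 2^k" using assms(2) less_exp[of k] by linarith
  also have "(2::nat)^k \<le> N^k" using assms(1) by (rule power_mono) simp
  finally show ?thesis .
qed

lemma dd_prop: assumes "N \<ge> 2" shows "a div N^(dd N a b) = b div N^(dd N a b)"
  unfolding dd_def
  by (rule LeastI[of _ "a+b"]) (simp add: div_less big_pow[OF assms])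

lemma dd_same[simp]: "dd N a a = 0" by (simp add: dd_def)

lemma dd_rec:
  assumes "N \<ge> 2" "a \<noteq> b"
  shows "dd N a b = Suc (dd N (a div N) (b div N))"
proof -
  have a: "a < N^(a+b)" by (rule big_pow[OF assms(1)]) simp
  have b: "b < N^(a+b)" by (rule big_pow[OF assms(1)]) simp
  have "(LEAST k. a div N^k = b div N^k) = Suc (LEAST k. a div N^Suc k = b div N^Suc k)"
    by (rule Least_Suc[of _ "a+b"]) (use a b assms in \<open>auto simp: div_less\<close>)
  then show ?thesis unfolding dd_def by (simp add: div_mult2_eq mult.commute)
qed

lemma dd_pos: assumes "N \<ge> 2" "a \<noteq> b" shows "dd N a b \<ge> 1"
  using dd_rec[OF assms] by simp

lemma dd_sym: "dd N a b = dd N b a" by (simp add: dd_def eq_commute)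



lemma count_lt: assumes "a0 \<le> N" shows "(\<Sum>y<N. if y < a0 then c else 0) = real a0 * (c::real)"
proof -
  have "(\<Sum>y<N. if y < a0 then c else 0) = sum (\<lambda>_. c) ({..<N} \<inter> {..<a0})"
    by (subst sum.inter_restrict) auto
  also have "{..<N} \<inter> {..<a0} = {..<a0}" using assms by auto
  finally show ?thesis by simp
qed

lemma count_gt: assumes "a0 < N" shows "(\<Sum>y<N. if a0 < y then c else 0) = (real N - 1 - real a0) * (c::real)"
proof -
  have "(\<Sum>y<N. if a0 < y then c else 0) = sum (\<lambda>_. c) ({..<N} \<inter> {a0<..})"
    by (subst sum.inter_restrict) auto
  also have "{..<N} \<inter> {a0<..} = {a0<..<N}" using assms by auto
  finally show ?thesis using assms by (simp add: of_nat_diff)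
qed

lemma split_cmp:
  fixes x a' y a0 N :: nat
  assumes "y < N" "a0 < N"
  shows "x*N + y < a'*N + a0 \<longleftrightarrow> x < a' \<or> (x = a' \<and> y < a0)"
proof (cases x a' rule: linorder_cases)
  case less
  then have "x*N + y < (x+1)*N" using assms by simp
  also have "(x+1)*N \<le> a'*N" using less by (intro mult_le_mono1) simp
  finally show ?thesis using less by simp
next
  case equal then show ?thesis by simp
next
  case greater
  then have "a'*N + a0 < (a'+1)*N" using assms by simp
  also have "(a'+1)*N \<le> x*N" using greater by (intro mult_le_mono1) simp
  finally show ?thesis using greater by simp
qed

lemma dd_digit:
  assumes "N \<ge> 2" "y < N" "x*N + y \<noteq> a"
  shows "dd N a (x*N+y) = Suc (dd N (a div N) x)"
proof -
  have "(x*N + y) div N = x" using assms by simp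
  then show ?thesis using dd_rec[OF assms(1), of a "x*N+y"] assms(3) by auto
qed

lemma Lsum:
  assumes "N \<ge> 2" "a < N^n"
  shows "(\<Sum>b<N^n. if b < a then (1/real N)^(dd N a b) else 0) = real (ds N n a) / real N"
  using assms(2)
proof (induction n arbitrary: a)
  case 0 then show ?case by simp
next
  case (Suc n)
  define a0 where "a0 = a mod N"
  define a' where "a' = a div N"
  have a: "a = a'*N + a0" unfolding a0_def a'_def by (rule div_mult_mod_eq[symmetric])
  have a0N: "a0 < N" using assms(1) by (simp add: a0_def)
  have a'n: "a' < N^n" unfolding a'_def
    by (rule less_mult_imp_div_less) (use Suc.prems in \<open>simp add: mult.commute\<close>)
  have Np: "real N > 0" using assms(1) by simp
  have inner: "(\<Sum>y<N. if x*N+y < a then (1/real N)^(dd N a (x*N+y)) else 0)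
     = (if x < a' then (1/real N)^(dd N a' x) else 0) + (if x = a' then real a0 / real N else 0)" for x
  proof (cases x a' rule: linorder_cases)
    case less
    have "(\<Sum>y<N. if x*N+y < a then (1/real N)^(dd N a (x*N+y)) else 0)
        = (\<Sum>y<N. (1/real N) * (1/real N)^(dd N a' x))"
    proof (intro sum.cong refl)
      fix y assume "y \<in> {..<N}"
      then have y: "y < N" by simp
      have lt: "x*N+y < a" using split_cmp[OF y a0N, of x a'] less a by simp
      then show "(if x*N+y < a then (1/real N)^(dd N a (x*N+y)) else 0) = (1/real N) * (1/real N)^(dd N a' x)"
        using dd_digit[OF assms(1) y, of x a] by (simp add: a'_def)
    qed
    also have "\<dots> = (1/real N)^(dd N a' x)" using Np by simp
    finally show ?thesis using less by simp
  next
    case equal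
    have "(\<Sum>y<N. if x*N+y < a then (1/real N)^(dd N a (x*N+y)) else 0)
        = (\<Sum>y<N. if y < a0 then 1/real N else 0)"
    proof (intro sum.cong refl)
      fix y assume "y \<in> {..<N}"
      then have y: "y < N" by simp
      have iff: "x*N+y < a \<longleftrightarrow> y < a0" using split_cmp[OF y a0N, of x a'] equal a by simp
      show "(if x*N+y < a then (1/real N)^(dd N a (x*N+y)) else 0) = (if y < a0 then 1/real N else 0)"
      proof (cases "y < a0")
        case True
        then have "x*N+y \<noteq> a" using a equal by simp
        then show ?thesis using True iff dd_digit[OF assms(1) y, of x a] equal by (simp add: a'_def)
      qed (use iff in simp)
    qed
    also have "\<dots> = real a0 / real N" using count_lt[of a0 N "1/real N"] a0N by simp
    finally show ?thesis using equal by simp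
  next
    case greater
    have "(\<Sum>y<N. if x*N+y < a then (1/real N)^(dd N a (x*N+y)) else 0) = 0"
      using split_cmp[OF _ a0N, of _ x a'] greater a by (intro sum.neutral) auto
    then show ?thesis using greater by simp
  qed
  have "(\<Sum>b<N^Suc n. if b < a then (1/real N)^(dd N a b) else 0)
      = (\<Sum>x<N^n. \<Sum>y<N. if x*N+y < a then (1/real N)^(dd N a (x*N+y)) else 0)"
    using sum_split2[of "\<lambda>b. if b < a then (1/real N)^(dd N a b) else 0" "N^n" N]
    by (simp add: mult.commute)
  also have "\<dots> = (\<Sum>x<N^n. (if x < a' then (1/real N)^(dd N a' x) else 0) + (if x = a' then real a0 / real N else 0))"
    using inner by simp
  also have "\<dots> = real (ds N n a') / real N + real a0 / real N"
    using Suc.IH[OF a'n] a'n by (simp add: sum.distrib)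
  also have "\<dots> = real (ds N (Suc n) a) / real N"
    by (simp add: ds_Suc a0_def a'_def add_divide_distrib)
  finally show ?case .
qed

lemma Usum:
  assumes "N \<ge> 2" "a < N^n"
  shows "(\<Sum>b<N^n. if a < b then (1/real N)^(dd N a b) else 0) = (real n * (real N - 1) - real (ds N n a)) / real N"
  using assms(2)
proof (induction n arbitrary: a)
  case 0 then show ?case by simp
next
  case (Suc n)
  define a0 where "a0 = a mod N"
  define a' where "a' = a div N"
  have a: "a = a'*N + a0" unfolding a0_def a'_def by (rule div_mult_mod_eq[symmetric])
  have a0N: "a0 < N" using assms(1) by (simp add: a0_def)
  have a'n: "a' < N^n" unfolding a'_def
    by (rule less_mult_imp_div_less) (use Suc.prems in \<open>simp add: mult.commute\<close>)
  have Np: "real N > 0" using assms(1) by simp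
  have inner: "(\<Sum>y<N. if a < x*N+y then (1/real N)^(dd N a (x*N+y)) else 0)
     = (if a' < x then (1/real N)^(dd N a' x) else 0) + (if x = a' then (real N - 1 - real a0) / real N else 0)" for x
  proof (cases x a' rule: linorder_cases)
    case greater
    have "(\<Sum>y<N. if a < x*N+y then (1/real N)^(dd N a (x*N+y)) else 0)
        = (\<Sum>y<N. (1/real N) * (1/real N)^(dd N a' x))"
    proof (intro sum.cong refl)
      fix y assume "y \<in> {..<N}"
      then have y: "y < N" by simp
      have lt: "a < x*N+y"
      proof -
        have "(a'+1)*N \<le> x*N" using greater by (intro mult_le_mono1) simp
        then show ?thesis using a a0N by simp
      qed
      then show "(if a < x*N+y then (1/real N)^(dd N a (x*N+y)) else 0) = (1/real N) * (1/real N)^(dd N a' x)"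
        using dd_digit[OF assms(1) y, of x a] by (simp add: a'_def)
    qed
    also have "\<dots> = (1/real N)^(dd N a' x)" using Np by simp
    finally show ?thesis using greater by simp
  next
    case equal
    have "(\<Sum>y<N. if a < x*N+y then (1/real N)^(dd N a (x*N+y)) else 0)
        = (\<Sum>y<N. if a0 < y then 1/real N else 0)"
    proof (intro sum.cong refl)
      fix y assume "y \<in> {..<N}"
      then have y: "y < N" by simp
      have iff: "a < x*N+y \<longleftrightarrow> a0 < y" using equal a by simp
      show "(if a < x*N+y then (1/real N)^(dd N a (x*N+y)) else 0) = (if a0 < y then 1/real N else 0)"
      proof (cases "a0 < y")
        case True
        then have "x*N+y \<noteq> a" using a equal by simp
        then show ?thesis using True iff dd_digit[OF assms(1) y, of x a] equal by (simp add: a'_def)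
      qed (use iff in simp)
    qed
    also have "\<dots> = (real N - 1 - real a0) / real N" using count_gt[of a0 N "1/real N"] a0N by simp
    finally show ?thesis using equal by simp
  next
    case less
    have "(\<Sum>y<N. if a < x*N+y then (1/real N)^(dd N a (x*N+y)) else 0) = 0"
    proof (intro sum.neutral ballI)
      fix y assume "y \<in> {..<N}"
      then have "x*N+y < a" using split_cmp[OF _ a0N, of y x a'] less a by simp
      then show "(if a < x*N+y then (1/real N)^(dd N a (x*N+y)) else 0) = 0" by simp
    qed
    then show ?thesis using less by simp
  qed
  have "(\<Sum>b<N^Suc n. if a < b then (1/real N)^(dd N a b) else 0)
      = (\<Sum>x<N^n. \<Sum>y<N. if a < x*N+y then (1/real N)^(dd N a (x*N+y)) else 0)"
    using sum_split2[of "\<lambda>b. if a < b then (1/real N)^(dd N a b) else 0" "N^n" N]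
    by (simp add: mult.commute)
  also have "\<dots> = (\<Sum>x<N^n. (if a' < x then (1/real N)^(dd N a' x) else 0) + (if x = a' then (real N - 1 - real a0) / real N else 0))"
    using inner by simp
  also have "\<dots> = (real n * (real N - 1) - real (ds N n a')) / real N + (real N - 1 - real a0) / real N"
    using Suc.IH[OF a'n] a'n by (simp add: sum.distrib)
  also have "\<dots> = (real (Suc n) * (real N - 1) - real (ds N (Suc n) a)) / real N"
    by (simp add: ds_Suc a0_def a'_def add_divide_distrib diff_divide_distrib algebra_simps)
  finally show ?case .
qed



lemma ham_J:
  assumes N: "N \<ge> 2" and J: "\<And>i. 1 \<le> i \<Longrightarrow> i \<le> n \<Longrightarrow> J i = Jt / real N ^ i"
  shows "hamiltonian N n J h \<sigma> = hamiltonian N n (\<lambda>d. Jt / real N ^ d) h \<sigma>"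
  unfolding hamiltonian_def
proof -
  have "(\<Sum>(v,w) \<in> {(v,w). 1 \<le> v \<and> v < w \<and> w \<le> N ^ n}. J (hdist N v w) * \<sigma> v * \<sigma> w)
      = (\<Sum>(v,w) \<in> {(v,w). 1 \<le> v \<and> v < w \<and> w \<le> N ^ n}. Jt / real N ^ (hdist N v w) * \<sigma> v * \<sigma> w)"
  proof (intro sum.cong refl, clarify)
    fix v w assume vw: "1 \<le> v" "v < w" "w \<le> N^n"
    obtain a where a: "v = Suc a" using vw by (cases v) auto
    obtain b where b: "w = Suc b" using vw by (cases w) auto
    have hd: "hdist N v w = dd N a b" using a b hdist_dd by simp
    have "dd N a b \<ge> 1" using dd_pos[OF N] a b vw by simp
    moreover have "dd N a b \<le> n" using dd_le[of a N n b] a b vw by simp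
    ultimately show "J (hdist N v w) * \<sigma> v * \<sigma> w = Jt / real N ^ hdist N v w * \<sigma> v * \<sigma> w"
      using J hd by simp
  qed
  then show "- (1 / 2) * (\<Sum>(v, w)\<in>{(v, w). 1 \<le> v \<and> v < w \<and> w \<le> N ^ n}. J (hdist N v w) * \<sigma> v * \<sigma> w) -
    h / 2 * sum \<sigma> {1..N ^ n} =
    - (1 / 2) * (\<Sum>(v, w)\<in>{(v, w). 1 \<le> v \<and> v < w \<and> w \<le> N ^ n}. Jt / real N ^ hdist N v w * \<sigma> v * \<sigma> w) -
    h / 2 * sum \<sigma> {1..N ^ n}" by simp
qed

lemma pair_sigma:
  fixes f :: "nat \<Rightarrow> nat \<Rightarrow> real"
  shows "(\<Sum>(v,w) \<in> {(v,w). 1 \<le> v \<and> v < w \<and> w \<le> Q}. f v w) = (\<Sum>v\<in>{1..Q}. \<Sum>w\<in>{v<..Q}. f v w)"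
proof -
  have "{(v,w). 1 \<le> v \<and> v < w \<and> w \<le> Q} = Sigma {1..Q} (\<lambda>v. {v<..Q})" by auto
  then show ?thesis by (simp add: sum.Sigma)
qed

lemma pair_diff:
  fixes g :: "nat \<Rightarrow> nat \<Rightarrow> real" and \<sigma> :: "nat \<Rightarrow> real"
  assumes k: "1 \<le> k" "k \<le> Q" and sk: "\<sigma> k = -1"
  shows "(\<Sum>(v,w) \<in> {(v,w). 1 \<le> v \<and> v < w \<and> w \<le> Q}. g v w * (\<sigma>(k:=1)) v * (\<sigma>(k:=1)) w)
       - (\<Sum>(v,w) \<in> {(v,w). 1 \<le> v \<and> v < w \<and> w \<le> Q}. g v w * \<sigma> v * \<sigma> w)
       = 2 * (\<Sum>w\<in>{k<..Q}. g k w * \<sigma> w) + 2 * (\<Sum>v\<in>{1..<k}. g v k * \<sigma> v)"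
proof -
  let ?P = "{(v,w). 1 \<le> v \<and> v < w \<and> w \<le> Q}"
  have "(\<Sum>(v,w) \<in> ?P. g v w * (\<sigma>(k:=1)) v * (\<sigma>(k:=1)) w) - (\<Sum>(v,w) \<in> ?P. g v w * \<sigma> v * \<sigma> w)
      = (\<Sum>(v,w) \<in> ?P. g v w * (\<sigma>(k:=1)) v * (\<sigma>(k:=1)) w - g v w * \<sigma> v * \<sigma> w)"
    by (simp add: sum_subtractf case_prod_beta)
  also have "\<dots> = (\<Sum>v\<in>{1..Q}. \<Sum>w\<in>{v<..Q}. g v w * (\<sigma>(k:=1)) v * (\<sigma>(k:=1)) w - g v w * \<sigma> v * \<sigma> w)"
    by (rule pair_sigma)
  also have "\<dots> = (\<Sum>v\<in>{1..Q}. \<Sum>w\<in>{v<..Q}. (if v = k then 2 * g k w * \<sigma> w else 0) + (if w = k then 2 * g v k * \<sigma> v else 0))"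
    by (intro sum.cong refl) (auto simp: sk)
  also have "\<dots> = (\<Sum>v\<in>{1..Q}. (if v = k then \<Sum>w\<in>{k<..Q}. 2 * g k w * \<sigma> w else 0))
                + (\<Sum>v\<in>{1..Q}. (if v < k then 2 * g v k * \<sigma> v else 0))"
    unfolding sum.distrib[symmetric]
  proof (intro sum.cong refl)
    fix v assume v: "v \<in> {1..Q}"
    have "(\<Sum>w\<in>{v<..Q}. (if w = k then 2 * g v k * \<sigma> v else 0)) = (if v < k then 2 * g v k * \<sigma> v else 0)"
      using k by (simp add: sum.delta')
    then show "(\<Sum>w\<in>{v<..Q}. (if v = k then 2 * g k w * \<sigma> w else 0) + (if w = k then 2 * g v k * \<sigma> v else 0))
      = (if v = k then \<Sum>w\<in>{k<..Q}. 2 * g k w * \<sigma> w else 0) + (if v < k then 2 * g v k * \<sigma> v else 0)"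
      by (simp add: sum.distrib)
  qed
  also have "(\<Sum>v\<in>{1..Q}. (if v = k then \<Sum>w\<in>{k<..Q}. 2 * g k w * \<sigma> w else 0)) = (\<Sum>w\<in>{k<..Q}. 2 * g k w * \<sigma> w)"
    using k by (simp add: sum.delta')
  also have "(\<Sum>v\<in>{1..Q}. (if v < k then 2 * g v k * \<sigma> v else 0)) = (\<Sum>v\<in>{1..Q} \<inter> {..<k}. 2 * g v k * \<sigma> v)"
    by (subst sum.inter_restrict) auto
  also have "{1..Q} \<inter> {..<k} = {1..<k}" using k by auto
  finally show ?thesis by (simp add: sum_distrib_left mult.assoc)
qed

lemma gamma_upd: assumes "1 \<le> k" shows "gamma k = (gamma (k-1))(k := 1)"
proof (rule ext)
  fix v show "gamma k v = ((gamma (k-1))(k:=1)) v"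
  proof (cases "v = k")
    case True then show ?thesis using assms by (simp add: gamma_def)
  next
    case False
    then have "(1 \<le> v \<and> v \<le> k) = (1 \<le> v \<and> v \<le> k - 1)" using assms by auto
    then show ?thesis using False by (simp add: gamma_def)
  qed
qed

lemma ham_step:
  assumes k: "1 \<le> k" "k \<le> Q" and Q: "Q = N^n"
  shows "hamiltonian N n \<phi> h (gamma k) - hamiltonian N n \<phi> h (gamma (k-1))
     = (\<Sum>w\<in>{k<..Q}. \<phi> (hdist N k w)) - (\<Sum>v\<in>{1..<k}. \<phi> (hdist N v k)) - h"
proof -
  let ?s = "gamma (k-1)"
  have sk: "?s k = -1" using k by (simp add: gamma_def)
  note pd = pair_diff[where \<sigma>="gamma (k-1)" and g="\<lambda>v w. \<phi> (hdist N v w)" and k=k and Q=Q, OF k sk]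
  have g1: "(\<Sum>w\<in>{k<..Q}. \<phi> (hdist N k w) * ?s w) = - (\<Sum>w\<in>{k<..Q}. \<phi> (hdist N k w))"
  proof -
    have "(\<Sum>w\<in>{k<..Q}. \<phi> (hdist N k w) * ?s w) = (\<Sum>w\<in>{k<..Q}. - \<phi> (hdist N k w))"
      by (intro sum.cong refl) (auto simp: gamma_def)
    then show ?thesis by (simp add: sum_negf)
  qed
  have g2: "(\<Sum>v\<in>{1..<k}. \<phi> (hdist N v k) * ?s v) = (\<Sum>v\<in>{1..<k}. \<phi> (hdist N v k))"
    by (intro sum.cong refl) (auto simp: gamma_def)
  have f: "(\<Sum>v\<in>{1..Q}. gamma k v) - (\<Sum>v\<in>{1..Q}. ?s v) = 2"
  proof -
    have "(\<Sum>v\<in>{1..Q}. gamma k v) - (\<Sum>v\<in>{1..Q}. ?s v) = (\<Sum>v\<in>{1..Q}. if v = k then 2 else 0)"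
      unfolding sum_subtractf[symmetric] by (intro sum.cong refl) (auto simp: gamma_def)
    then show ?thesis using k by (simp add: sum.delta')
  qed
  show ?thesis
    unfolding hamiltonian_def gamma_upd[OF k(1)] Q[symmetric]
    using pd g1 g2 f[unfolded gamma_upd[OF k(1)]] by (simp add: algebra_simps)
qed



lemma upper_link:
  assumes "a < N^n"
  shows "(\<Sum>w\<in>{Suc a<..N^n}. Jt / real N ^ hdist N (Suc a) w)
       = Jt * (\<Sum>b<N^n. if a < b then (1/real N)^(dd N a b) else 0)"
proof -
  have e: "{Suc a<..N^n} = Suc ` {a<..<N^n}"
  proof -
    have "Suc ` {Suc a..<N^n} = {Suc (Suc a)..<Suc (N^n)}" by (rule image_Suc_atLeastLessThan)
    moreover have "{a<..<N^n} = {Suc a..<N^n}" by auto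
    moreover have "{Suc a<..N^n} = {Suc (Suc a)..<Suc (N^n)}" by auto
    ultimately show ?thesis by simp
  qed
  have "(\<Sum>w\<in>{Suc a<..N^n}. Jt / real N ^ hdist N (Suc a) w) = (\<Sum>b\<in>{a<..<N^n}. Jt / real N ^ dd N a b)"
    unfolding e by (subst sum.reindex) (auto simp: hdist_dd)
  also have "\<dots> = (\<Sum>b\<in>{..<N^n} \<inter> {a<..}. Jt * (1/real N)^(dd N a b))"
    by (intro sum.cong) (auto simp: power_one_over)
  also have "\<dots> = (\<Sum>b<N^n. if a < b then Jt * (1/real N)^(dd N a b) else 0)"
    by (subst sum.inter_restrict) auto
  also have "\<dots> = Jt * (\<Sum>b<N^n. if a < b then (1/real N)^(dd N a b) else 0)"
    unfolding sum_distrib_left by (intro sum.cong refl) simp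
  finally show ?thesis .
qed

lemma lower_link:
  assumes "a < N^n"
  shows "(\<Sum>v\<in>{1..<Suc a}. Jt / real N ^ hdist N v (Suc a))
       = Jt * (\<Sum>b<N^n. if b < a then (1/real N)^(dd N a b) else 0)"
proof -
  have e: "{1..<Suc a} = Suc ` {..<a}"
  proof -
    have "Suc ` {0..<a} = {Suc 0..<Suc a}" by (rule image_Suc_atLeastLessThan)
    then show ?thesis by (simp add: atLeast0LessThan)
  qed
  have "(\<Sum>v\<in>{1..<Suc a}. Jt / real N ^ hdist N v (Suc a)) = (\<Sum>b\<in>{..<a}. Jt / real N ^ dd N a b)"
    unfolding e by (subst sum.reindex) (auto simp: hdist_dd dd_sym)
  also have "\<dots> = (\<Sum>b\<in>{..<N^n} \<inter> {..<a}. Jt * (1/real N)^(dd N a b))"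
    using assms by (intro sum.cong) (auto simp: power_one_over)
  also have "\<dots> = (\<Sum>b<N^n. if b < a then Jt * (1/real N)^(dd N a b) else 0)"
    by (subst sum.inter_restrict) auto
  also have "\<dots> = Jt * (\<Sum>b<N^n. if b < a then (1/real N)^(dd N a b) else 0)"
    unfolding sum_distrib_left by (intro sum.cong refl) simp
  finally show ?thesis .
qed

lemma ham_step2:
  assumes N: "N \<ge> 2" and k: "1 \<le> k" "k \<le> N^n" and mn: "m \<le> n"
  shows "hamiltonian N n (\<lambda>d. Jt / real N ^ d) (hfield N n Jt (int m) (int s)) (gamma k)
       - hamiltonian N n (\<lambda>d. Jt / real N ^ d) (hfield N n Jt (int m) (int s)) (gamma (k-1))
       = Jt / real N * (((real N - 1) * real m + real s - 1) - 2 * real (ds N n (k-1)))"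
proof -
  obtain a where a: "k = Suc a" using k by (cases k) auto
  have an: "a < N^n" using a k by simp
  have "hamiltonian N n (\<lambda>d. Jt / real N ^ d) (hfield N n Jt (int m) (int s)) (gamma k)
       - hamiltonian N n (\<lambda>d. Jt / real N ^ d) (hfield N n Jt (int m) (int s)) (gamma (k-1))
    = Jt * ((real n * (real N - 1) - real (ds N n a)) / real N) - Jt * (real (ds N n a) / real N)
      - hfield N n Jt (int m) (int s)"
    using ham_step[OF k refl] upper_link[OF an, of Jt] lower_link[OF an, of Jt]
      Usum[OF N an] Lsum[OF N an] a by simp
  also have "\<dots> = Jt / real N * (((real N - 1) * real m + real s - 1) - 2 * real (ds N n a))"
    using N unfolding hfield_def by (simp add: field_simps)
  finally show ?thesis using a by simp
qed

lemma ham_cum: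
  assumes N: "N \<ge> 2" and K: "K \<le> N^n" and mn: "m \<le> n"
  shows "hamiltonian N n (\<lambda>d. Jt / real N ^ d) (hfield N n Jt (int m) (int s)) (gamma K)
       = hamiltonian N n (\<lambda>d. Jt / real N ^ d) (hfield N n Jt (int m) (int s)) (gamma 0)
         + Jt / real N * FF N n ((real N - 1) * real m + real s - 1) K"
  using K
proof (induction K)
  case 0 then show ?case by simp
next
  case (Suc K)
  have "hamiltonian N n (\<lambda>d. Jt / real N ^ d) (hfield N n Jt (int m) (int s)) (gamma (Suc K))
       = hamiltonian N n (\<lambda>d. Jt / real N ^ d) (hfield N n Jt (int m) (int s)) (gamma K)
         + Jt / real N * (((real N - 1) * real m + real s - 1) - 2 * real (ds N n K))"
    using ham_step2[OF N _ Suc.prems mn, of Jt s] by simp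
  then show ?case using Suc by (simp add: FF_def algebra_simps)
qed

theorem lemma4p3:
  fixes N n :: nat and Jt :: real and J :: "nat \<Rightarrow> real" and s m :: nat
  assumes "N \<ge> 2" and "n \<ge> 1" and "Jt > 0"
    and "\<And>i. 1 \<le> i \<Longrightarrow> i \<le> n \<Longrightarrow> J i = Jt / real N ^ i"
    and "1 \<le> s" and "s \<le> N" and "m \<le> n - 1"
  shows "Max ((\<lambda>i. hamiltonian N n J (hfield N n Jt (int m) (int s)) (gamma i)) ` {1..N ^ n})
       = Max ((\<lambda>i. hamiltonian N n J (hfield N n Jt (int m) (int s)) (gamma i)) ` {1..s * N ^ m})"
proof -
  let ?h = "hfield N n Jt (int m) (int s)"
  define f where "f = (\<lambda>i. hamiltonian N n J ?h (gamma i))"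
  define c where "c = (real N - 1) * real m + real s - 1"
  define H0 where "H0 = hamiltonian N n (\<lambda>d. Jt / real N ^ d) ?h (gamma 0)"
  have m1: "m + 1 \<le> n" using assms by simp
  have mn: "m \<le> n" using m1 by simp
  have fF: "f i = H0 + Jt / real N * FF N n c i" if "i \<le> N^n" for i
  proof -
    have "f i = hamiltonian N n (\<lambda>d. Jt / real N ^ d) ?h (gamma i)"
      unfolding f_def by (rule ham_J[OF assms(1) assms(4)])
    then show ?thesis unfolding H0_def c_def using ham_cum[OF assms(1) that mn] by simp
  qed
  have sub: "{1..s*N^m} \<subseteq> {1..N^n}"
  proof -
    have "s*N^m \<le> N*N^m" using assms by simp
    also have "N*N^m = N^(m+1)" by simp
    also have "\<dots> \<le> N^n" using m1 assms(1) by (intro power_increasing) auto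
    finally show ?thesis by auto
  qed
  have ne: "{1..s*N^m} \<noteq> {}" using assms by simp
  have coef: "Jt / real N > 0" using assms by simp
  have dom: "\<exists>j\<in>{1..s*N^m}. f i \<le> f j" if "i \<in> {1..N^n}" for i
  proof -
    obtain j where j: "j \<in> {1..s*N^m}" "FF N n c i \<le> FF N n c j"
      using FF_main[OF assms(1) assms(5) assms(6) m1 c_def] by blast
    have "j \<in> {1..N^n}" using j(1) sub by (rule subsetD[rotated])
    then have "j \<le> N^n" by simp
    moreover have "Jt / real N * FF N n c i \<le> Jt / real N * FF N n c j"
      using j(2) coef by (intro mult_left_mono) auto
    ultimately have "f i \<le> f j" using fF[of i] fF[of j] that by simp
    then show ?thesis using j by blast
  qed
  have "Max (f ` {1..N^n}) = Max (f ` {1..s*N^m})"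
  proof (rule antisym)
    show "Max (f ` {1..N^n}) \<le> Max (f ` {1..s*N^m})"
    proof (rule Max.boundedI)
      show "finite (f ` {1..N^n})" by simp
      have "1 \<in> {1..N^n}" using assms(1) by simp
      then show "f ` {1..N^n} \<noteq> {}" by blast
      fix x assume "x \<in> f ` {1..N^n}"
      then obtain i where i: "i \<in> {1..N^n}" "x = f i" by blast
      then obtain j where j: "j \<in> {1..s*N^m}" "f i \<le> f j" using dom by blast
      have mj: "f j \<le> Max (f ` {1..s*N^m})" using j(1) by (intro Max_ge) auto
      show "x \<le> Max (f ` {1..s*N^m})" using i(2) j(2) mj by linarith
    qed
    show "Max (f ` {1..s*N^m}) \<le> Max (f ` {1..N^n})"
      by (rule Max_mono) (use sub ne in auto)
  qed
  then show ?thesis unfolding f_def .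
qed


end
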